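(* Let $L$ be a subfit frame. Then $\overline{\mathrm{LSC}}(L)$ is meet-dense in $\overline{\mathrm{C}}(\mathrm{coS}(L))$ and $\overline{\mathrm{USC}}(L)$ is join-dense in $\overline{\mathrm{C}}(\mathrm{coS}(L))$.
   Context: A frame $L$ is subfit if for all $a,b\in L$ with $a\not\le b$ there is $c$ with $a\vee c=1\ne b\vee c$. A sublocale of $L$ is a subset closed under arbitrary meets and such that $x\to s\in S$ for $x\in L$, $s\in S$; $\mathrm{coS}(L)$ is the frame of all sublocales ordered by reverse inclusion. For $a\in L$, $\mathfrak{c}(a)=\{x\mid x\ge a\}$ is the closed sublocale. $\mathbb{Q}$ is the rationals. The frame of extended reals $\mathfrak{L}(\overline{\mathbb{R}})$ is presented by generators $(r,\textsf{---})$, $(\textsf{---},s)$ ($r,s\in\mathbb{Q}$) subject to (r1) $(r,\textsf{---})\wedge(\textsf{---},s)=0$ whenever $r\ge s$; (r2) $(r,\textsf{---})\vee(\textsf{---},s)=1$ whenever $r<s$; (r3) $(r,\textsf{---})=\bigvee_{s>r}(s,\textsf{---})$; (r4) $(\textsf{---},s)=\bigvee_{r<s}(\textsf{---},r)$. For a frame $M$, $\overline{\mathrm{C}}(M)$ is the set of frame homomorphisms $\mathfrak{L}(\overline{\mathbb{R}})\to M$ ordered by $f\le g$ iff $f(r,\textsf{---})\le g(r,\textsf{---})$ for all $r$. $\overline{\mathrm{LSC}}(L)$ (extended lower semicontinuous functions) is the set of $g\in\overline{\mathrm{C}}(\mathrm{coS}(L))$ with $g(r,\textsf{---})$ a closed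 sublocale for all $r\in\mathbb{Q}$; $\overline{\mathrm{USC}}(L)$ is the set of $g\in\overline{\mathrm{C}}(\mathrm{coS}(L))$ with $g(\textsf{---},s)$ closed for all $s$. A subset $A$ of a poset $P$ is meet-dense (join-dense) if every element of $P$ is a meet (join) in $P$ of elements of $A$. *)

theory Defs
  imports Complex_Main
begin

class frame = complete_lattice +
  assumes inf_Sup_distrib_frame: "inf a (Sup B) = (SUP b\<in>B. inf a b)"

definition subfit :: "'a::frame itself \<Rightarrow> bool" where
  "subfit _ \<longleftrightarrow> (\<forall>a b :: 'a. \<not> a \<le> b \<longrightarrow> (\<exists>c. sup a c = top \<and> sup b c \<noteq> top))"

definition himp :: "'a::frame \<Rightarrow> 'a \<Rightarrow> 'a" where
  "himp x s = Sup {y. inf y x \<le> s}"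

definition is_sublocale :: "'a::frame set \<Rightarrow> bool" where
  "is_sublocale S \<longleftrightarrow> (\<forall>X. X \<subseteq> S \<longrightarrow> Inf X \<in> S) \<and> (\<forall>x s. s \<in> S \<longrightarrow> himp x s \<in> S)"

text \<open>The frame coS(L): sublocales ordered by reverse inclusion.\<close>
definition coS_le :: "'a::frame set \<Rightarrow> 'a set \<Rightarrow> bool" where
  "coS_le A B \<longleftrightarrow> B \<subseteq> A"

definition coS_top :: "'a::frame set" where "coS_top = {top}"
definition coS_bot :: "'a::frame set" where "coS_bot = UNIV"

definition coS_Join :: "'a::frame set set \<Rightarrow> 'a set" where
  "coS_Join F = \<Inter>F"

definition coS_join :: "'a::frame set \<Rightarrow> 'a set \<Rightarrow> 'a set" where
  "coS_join A B = A \<inter> B"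

definition coS_meet :: "'a::frame set \<Rightarrow> 'a set \<Rightarrow> 'a set" where
  "coS_meet A B = \<Inter>{S. is_sublocale S \<and> A \<union> B \<subseteq> S}"

definition closed_sub :: "'a::frame \<Rightarrow> 'a set" where
  "closed_sub a = {x. a \<le> x}"

text \<open>Generators of the frame of extended reals: Up r = (r,---), Down s = (---,s).\<close>
datatype gen = Up rat | Down rat

text \<open>Frame homomorphisms L(extended reals) -> coS(L), given (by the universal
  property of the presentation) by their values on generators satisfying (r1)-(r4).\<close>
definition extC_coS :: "'a::frame itself \<Rightarrow> (gen \<Rightarrow> 'a set) set" where
  "extC_coS _ = {f. (\<forall>g. is_sublocale (f g))
     \<and> (\<forall>r s. r \<ge> s \<longrightarrow> coS_meet (f (Up r)) (f (Down s)) = coS_bot)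
     \<and> (\<forall>r s. r < s \<longrightarrow> coS_join (f (Up r)) (f (Down s)) = coS_top)
     \<and> (\<forall>r. f (Up r) = coS_Join {f (Up s) | s. s > r})
     \<and> (\<forall>s. f (Down s) = coS_Join {f (Down r) | r. r < s})}"

definition extC_le :: "(gen \<Rightarrow> 'a::frame set) \<Rightarrow> (gen \<Rightarrow> 'a set) \<Rightarrow> bool" where
  "extC_le f g \<longleftrightarrow> (\<forall>r. coS_le (f (Up r)) (g (Up r)))"

definition extLSC :: "'a::frame itself \<Rightarrow> (gen \<Rightarrow> 'a set) set" where
  "extLSC T = {g \<in> extC_coS T. \<forall>r. \<exists>a. g (Up r) = closed_sub a}"

definition extUSC :: "'a::frame itself \<Rightarrow> (gen \<Rightarrow> 'a set) set" where
  "extUSC T = {g \<in> extC_coS T. \<forall>s. \<exists>a. g (Down s) = closed_sub a}"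

definition is_meet_in :: "'b set \<Rightarrow> ('b \<Rightarrow> 'b \<Rightarrow> bool) \<Rightarrow> 'b set \<Rightarrow> 'b \<Rightarrow> bool" where
  "is_meet_in P le B x \<longleftrightarrow> x \<in> P \<and> (\<forall>b\<in>B. le x b) \<and> (\<forall>y\<in>P. (\<forall>b\<in>B. le y b) \<longrightarrow> le y x)"

definition is_join_in :: "'b set \<Rightarrow> ('b \<Rightarrow> 'b \<Rightarrow> bool) \<Rightarrow> 'b set \<Rightarrow> 'b \<Rightarrow> bool" where
  "is_join_in P le B x \<longleftrightarrow> x \<in> P \<and> (\<forall>b\<in>B. le b x) \<and> (\<forall>y\<in>P. (\<forall>b\<in>B. le b y) \<longrightarrow> le x y)"

definition meet_dense :: "'b set \<Rightarrow> ('b \<Rightarrow> 'b \<Rightarrow> bool) \<Rightarrow> 'b set \<Rightarrow> bool" where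
  "meet_dense P le A \<longleftrightarrow> (\<forall>x\<in>P. \<exists>B\<subseteq>A. is_meet_in P le B x)"

definition join_dense :: "'b set \<Rightarrow> ('b \<Rightarrow> 'b \<Rightarrow> bool) \<Rightarrow> 'b set \<Rightarrow> bool" where
  "join_dense P le A \<longleftrightarrow> (\<forall>x\<in>P. \<exists>B\<subseteq>A. is_join_in P le B x)"

end

theory Submission
  imports Defs
begin

context frame begin
subclass distrib_lattice
proof
  have d: "inf x (sup y z) = sup (inf x y) (inf x z)" for x y z
    using inf_Sup_distrib_frame[of x "{y,z}"] by simp
  show "sup x (inf y z) = inf (sup x y) (sup x z)" for x y z
    by (rule distrib_imp1) (rule d)
qed
end

lemma himp_adj: fixes x :: "'a::frame" shows "inf y x \<le> s \<longleftrightarrow> y \<le> himp x s"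
proof
  assume "inf y x \<le> s" thus "y \<le> himp x s" unfolding himp_def by (auto intro: Sup_upper)
next
  assume "y \<le> himp x s"
  hence "inf y x \<le> inf x (himp x s)" by (simp add: inf_commute le_infI1 inf.coboundedI2)
  also have "inf x (himp x s) = (SUP b\<in>{y. inf y x \<le> s}. inf x b)"
    by (simp add: himp_def inf_Sup_distrib_frame)
  also have "\<dots> \<le> s" by (auto intro: SUP_least simp: inf_commute)
  finally show "inf y x \<le> s" .
qed

lemma himp_ge: fixes x :: "'a::frame" shows "s \<le> himp x s"
  using himp_adj[of s x s] by simp

lemma himp_top_iff: fixes x :: "'a::frame" shows "himp x s = top \<longleftrightarrow> x \<le> s"
  using himp_adj[of top x s] by (simp add: top_unique)

lemma inf_himp: fixes x :: "'a::frame" shows "inf x (himp x s) \<le> s"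
  using himp_adj[of "himp x s" x s] by (simp add: inf_commute)

lemma inf_himp_eq: fixes a :: "'a::frame" shows "z \<le> a \<Longrightarrow> inf a (himp a z) = z"
  by (meson himp_ge inf_himp le_inf_iff order.antisym order.refl)

lemma himp_mono: fixes x :: "'a::frame" shows "s \<le> s' \<Longrightarrow> himp x s \<le> himp x s'"
  by (meson himp_adj inf_himp order.trans inf_commute order.refl)

lemma eq_by_le: fixes a :: "'a::order" shows "(\<And>y. y \<le> a \<longleftrightarrow> y \<le> b) \<Longrightarrow> a = b"
  by (meson order.antisym order.refl)

lemma himp_Inf: fixes a :: "'a::frame" shows "himp a (Inf X) = Inf (himp a ` X)"
  apply (rule eq_by_le)
  apply (simp add: himp_adj[symmetric] le_Inf_iff)
  done

lemma himp_inf: fixes a :: "'a::frame" shows "himp a (inf p q) = inf (himp a p) (himp a q)"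
  apply (rule eq_by_le)
  apply (simp add: himp_adj[symmetric])
  done

lemma himp_himp: fixes a :: "'a::frame" shows "himp a (himp b c) = himp (inf a b) c"
  apply (rule eq_by_le)
  apply (simp add: himp_adj[symmetric] inf_assoc)
  done

lemma himp_same: fixes a :: "'a::frame" shows "himp a (himp a c) = himp a c"
  by (simp add: himp_himp)

lemma himp_top: fixes x :: "'a::frame" shows "x \<le> s \<Longrightarrow> himp x s = top"
  by (simp add: himp_top_iff)

lemma himp_refl[simp]: fixes p :: "'a::frame" shows "himp p p = top"
  by (simp add: himp_top_iff)

lemma himp_self_inf: fixes p :: "'a::frame" shows "himp p (inf p t) = himp p t"
  by (simp add: himp_inf)


section \<open>Sublocales\<close>

definition opn :: "'a::frame \<Rightarrow> 'a set" where "opn a = {w. himp a w = w}"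
definition nuc :: "'a::frame set \<Rightarrow> 'a \<Rightarrow> 'a" where "nuc S z = Inf {t\<in>S. z \<le> t}"
definition jn :: "'a::frame set \<Rightarrow> 'a set \<Rightarrow> 'a set" where
  "jn A B = {inf a b | a b. a \<in> A \<and> b \<in> B}"
definition TT :: "'a::frame set \<Rightarrow> 'a \<Rightarrow> 'a set" where
  "TT D x = jn (closed_sub (nuc D x)) (opn x)"
definition KK :: "'a::frame set \<Rightarrow> 'a \<Rightarrow> 'a set" where
  "KK D x = closed_sub x \<inter> opn (nuc D x)"

lemma sl_Inf: "is_sublocale S \<Longrightarrow> X \<subseteq> S \<Longrightarrow> Inf X \<in> S"
  unfolding is_sublocale_def by blast

lemma sl_himp: "is_sublocale S \<Longrightarrow> s \<in> S \<Longrightarrow> himp x s \<in> S"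
  unfolding is_sublocale_def by blast

lemma sl_top: "is_sublocale S \<Longrightarrow> top \<in> S"
  using sl_Inf[of S "{}"] by simp

lemma sl_inf: "is_sublocale S \<Longrightarrow> a \<in> S \<Longrightarrow> b \<in> S \<Longrightarrow> inf a b \<in> S"
  using sl_Inf[of S "{a,b}"] by simp

lemma sl_I: "(\<And>X. X \<subseteq> S \<Longrightarrow> Inf X \<in> S) \<Longrightarrow> (\<And>x s. s \<in> S \<Longrightarrow> himp x s \<in> S) \<Longrightarrow> is_sublocale S"
  unfolding is_sublocale_def by blast

lemma nuc_in: "is_sublocale S \<Longrightarrow> nuc S z \<in> S"
  unfolding nuc_def by (rule sl_Inf) auto

lemma nuc_ge: "z \<le> nuc S z"
  unfolding nuc_def by (auto intro: Inf_greatest)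

lemma nuc_le: "t \<in> S \<Longrightarrow> z \<le> t \<Longrightarrow> nuc S z \<le> t"
  unfolding nuc_def by (auto intro: Inf_lower)

lemma sl_closed: "is_sublocale (closed_sub (a::'a::frame))"
proof (rule sl_I)
  fix X assume "X \<subseteq> closed_sub a"
  thus "Inf X \<in> closed_sub a" unfolding closed_sub_def by (auto intro: Inf_greatest)
next
  fix x s assume "s \<in> closed_sub a"
  thus "himp x s \<in> closed_sub a" unfolding closed_sub_def using himp_ge[of s x] by auto
qed

lemma sl_opn: "is_sublocale (opn (a::'a::frame))"
proof (rule sl_I)
  fix X assume X: "X \<subseteq> opn a"
  have "\<And>w. w \<in> X \<Longrightarrow> himp a w = id w" using X unfolding opn_def by auto
  hence "himp a ` X = id ` X" by (rule image_cong[OF refl])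
  hence "himp a (Inf X) = Inf X" by (simp add: himp_Inf)
  thus "Inf X \<in> opn a" by (simp add: opn_def)
next
  fix x s assume "s \<in> opn a"
  hence s: "himp a s = s" by (simp add: opn_def)
  have "himp a (himp x s) = himp x (himp a s)" by (simp add: himp_himp inf_commute)
  thus "himp x s \<in> opn a" using s by (simp add: opn_def)
qed

lemma sl_UNIV: "is_sublocale (UNIV::'a::frame set)"
  by (rule sl_I) simp_all

lemma sl_topset: "is_sublocale {top::'a::frame}"
proof (rule sl_I)
  fix X assume "X \<subseteq> {top::'a}"
  hence "X = {} \<or> X = {top}" by blast
  thus "Inf X \<in> {top}" by auto
next
  fix x s assume "s \<in> {top::'a}"
  thus "himp x s \<in> {top}" by (simp add: himp_top)
qed

lemma sl_Int: assumes A: "is_sublocale A" and B: "is_sublocale B" shows "is_sublocale (A \<inter> B)"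
proof (rule sl_I)
  fix X assume "X \<subseteq> A \<inter> B"
  thus "Inf X \<in> A \<inter> B" using sl_Inf[OF A, of X] sl_Inf[OF B, of X] by simp
next
  fix x s assume "s \<in> A \<inter> B"
  thus "himp x s \<in> A \<inter> B" using sl_himp[OF A, of s x] sl_himp[OF B, of s x] by simp
qed

lemma jn_memI: "a \<in> A \<Longrightarrow> b \<in> B \<Longrightarrow> inf a b \<in> jn A B"
  unfolding jn_def by blast

lemma sl_jn: assumes A: "is_sublocale A" and B: "is_sublocale B" shows "is_sublocale (jn A B)"
proof (rule sl_I)
  fix X assume X: "X \<subseteq> jn A B"
  have "\<forall>w\<in>X. \<exists>p. fst p \<in> A \<and> snd p \<in> B \<and> w = inf (fst p) (snd p)"
  proof
    fix w assume "w \<in> X"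
    with X have "w \<in> jn A B" by blast
    then obtain a b where ab: "a \<in> A" "b \<in> B" "w = inf a b" unfolding jn_def by blast
    have "fst (a,b) \<in> A \<and> snd (a,b) \<in> B \<and> w = inf (fst (a,b)) (snd (a,b))" using ab by simp
    thus "\<exists>p. fst p \<in> A \<and> snd p \<in> B \<and> w = inf (fst p) (snd p)" by blast
  qed
  from bchoice[OF this] obtain h where h: "\<forall>w\<in>X. fst (h w) \<in> A \<and> snd (h w) \<in> B \<and> w = inf (fst (h w)) (snd (h w))"
    by blast
  have e: "inf (fst (h w)) (snd (h w)) = id w" if "w \<in> X" for w
  proof -
    from that have "w = inf (fst (h w)) (snd (h w))" using h by blast
    thus ?thesis unfolding id_def by (rule sym)
  qed
  have "(\<lambda>w. inf (fst (h w)) (snd (h w))) ` X = id ` X" by (rule image_cong[OF refl e])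
  hence "Inf X = Inf ((\<lambda>w. inf (fst (h w)) (snd (h w))) ` X)" by simp
  also have "\<dots> = inf (INF w\<in>X. fst (h w)) (INF w\<in>X. snd (h w))"
    by (simp add: INF_inf_distrib)
  finally have eq: "Inf X = inf (INF w\<in>X. fst (h w)) (INF w\<in>X. snd (h w))" .
  have "(INF w\<in>X. fst (h w)) \<in> A" using h by (intro sl_Inf[OF A]) blast
  moreover have "(INF w\<in>X. snd (h w)) \<in> B" using h by (intro sl_Inf[OF B]) blast
  ultimately show "Inf X \<in> jn A B" unfolding eq by (rule jn_memI)
next
  fix x s assume "s \<in> jn A B"
  then obtain a b where ab: "a \<in> A" "b \<in> B" "s = inf a b" unfolding jn_def by blast
  have "himp x s = inf (himp x a) (himp x b)" using ab by (simp add: himp_inf)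
  moreover have "himp x a \<in> A" "himp x b \<in> B" using ab sl_himp[OF A] sl_himp[OF B] by auto
  ultimately show "himp x s \<in> jn A B" using jn_memI by simp
qed

lemma coS_meet_UNIV:
  assumes A: "is_sublocale A" and B: "is_sublocale B"
  shows "coS_meet A B = UNIV \<longleftrightarrow> (\<forall>z. \<exists>a\<in>A. \<exists>b\<in>B. z = inf a b)"
proof
  assume "coS_meet A B = UNIV"
  moreover have "A \<union> B \<subseteq> jn A B"
  proof
    fix w assume "w \<in> A \<union> B"
    show "w \<in> jn A B"
    proof (cases "w \<in> A")
      case True
      have "w = inf w top" by simp
      thus ?thesis unfolding jn_def using True sl_top[OF B] by blast
    next
      case False
      hence "w \<in> B" using \<open>w \<in> A \<union> B\<close> by blast
      have "w = inf top w" by simp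
      thus ?thesis unfolding jn_def using \<open>w \<in> B\<close> sl_top[OF A] by blast
    qed
  qed
  hence "jn A B \<in> {S. is_sublocale S \<and> A \<union> B \<subseteq> S}" using sl_jn[OF A B] by blast
  hence "coS_meet A B \<subseteq> jn A B" unfolding coS_meet_def by (rule Inter_lower)
  ultimately have "UNIV \<subseteq> jn A B" by simp
  thus "\<forall>z. \<exists>a\<in>A. \<exists>b\<in>B. z = inf a b" unfolding jn_def by blast
next
  assume H: "\<forall>z. \<exists>a\<in>A. \<exists>b\<in>B. z = inf a b"
  have "UNIV \<subseteq> \<Inter>{S. is_sublocale S \<and> A \<union> B \<subseteq> S}"
  proof (intro subsetI InterI)
    fix z S assume "S \<in> {S. is_sublocale S \<and> A \<union> B \<subseteq> S}"
    then have S: "is_sublocale S" "A \<subseteq> S" "B \<subseteq> S" by auto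
    from H obtain a b where ab: "a \<in> A" "b \<in> B" "z = inf a b" by blast
    show "z \<in> S" unfolding ab(3) using S ab(1,2) sl_inf[of S a b] by blast
  qed
  thus "coS_meet A B = UNIV" unfolding coS_meet_def by blast
qed

lemma L1:
  assumes A: "is_sublocale A" and B: "is_sublocale B" and AB: "A \<inter> B \<subseteq> {top}"
    and u: "u \<in> A" and d: "d \<in> B" and eq: "u = inf p d"
  shows "u = p"
proof -
  have "himp p u \<in> A" using sl_himp[OF A u] .
  moreover have "himp p u = himp p d" using eq by (simp add: himp_self_inf)
  hence "himp p u \<in> B" using sl_himp[OF B d] by simp
  ultimately have "himp p u = top" using AB by blast
  hence "p \<le> u" by (simp add: himp_top_iff)
  thus ?thesis using eq by (simp add: order.antisym)
qed

lemma P1: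
  assumes A: "is_sublocale A" and B: "is_sublocale B"
    and a: "a \<in> A" and b: "b \<in> B" and eq: "z = inf a b"
  shows "himp (nuc A z) z \<in> B"
proof -
  have "nuc A z \<le> a" using eq a by (intro nuc_le) auto
  hence "himp (nuc A z) z = himp (nuc A z) b"
    using eq by (simp add: himp_inf himp_top)
  thus ?thesis using sl_himp[OF B b] by simp
qed

lemma himp_of_cover: fixes n :: "'a::frame"
  assumes "sup e n = top" "e \<le> h" shows "himp n h = h"
proof (rule order.antisym)
  have "himp n h = inf (himp n h) (sup e n)" using assms by simp
  also have "\<dots> = sup (inf (himp n h) e) (inf (himp n h) n)" by (simp add: inf_sup_distrib1)
  also have "\<dots> \<le> h" using assms(2) inf_himp[of n h]
    by (simp add: inf_commute le_infI1)
  finally show "himp n h \<le> h" .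
qed (rule himp_ge)

lemma subfit_open:
  assumes sf: "subfit TYPE('a::frame)" and u: "himp n u = (u::'a)"
  shows "u = Inf {sup u e |e. sup e n = top}"
proof (rule order.antisym)
  show "u \<le> Inf {sup u e |e. sup e n = top}" by (auto intro: Inf_greatest)
next
  define v where "v = Inf {sup u e |e. sup e n = top}"
  have vle: "v \<le> sup u e" if "sup e n = top" for e
    unfolding v_def using that by (auto intro: Inf_lower)
  have "inf v n \<le> u"
  proof (rule ccontr)
    assume "\<not> inf v n \<le> u"
    then obtain c where c1: "sup (inf v n) c = top" and c2: "sup u c \<noteq> top"
      using sf unfolding subfit_def by blast
    have "sup (inf v n) c \<le> sup c n" by (simp add: le_supI1 le_supI2 inf.coboundedI2)
    hence "top \<le> sup c n" using c1 by simp
    hence "sup c n = top" by (simp add: top_unique)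
    hence "v \<le> sup u c" by (rule vle)
    have "top = sup (inf v n) c" using c1 by simp
    also have "\<dots> \<le> sup v c" by (simp add: le_supI1)
    also have "\<dots> \<le> sup u c" using \<open>v \<le> sup u c\<close> by simp
    finally show False using c2 top_unique by blast
  qed
  hence "v \<le> himp n u" by (simp add: himp_adj)
  thus "v \<le> u" using u by simp
qed


lemma TT_sl: "is_sublocale (TT D x)"
  unfolding TT_def by (intro sl_jn sl_closed sl_opn)

lemma KK_sl: "is_sublocale (KK D x)"
  unfolding KK_def by (intro sl_Int sl_closed sl_opn)

lemma opn_memI: "himp a w = w \<Longrightarrow> w \<in> opn a" by (simp add: opn_def)

lemma D_sub_TT: assumes D: "is_sublocale D" shows "D \<subseteq> TT D x"
proof
  fix d assume d: "d \<in> D"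
  define n where "n = nuc D x"
  have "inf x (himp x d) \<le> d" by (rule inf_himp)
  hence "x \<le> himp (himp x d) d" by (simp add: himp_adj)
  moreover have "himp (himp x d) d \<in> D" using sl_himp[OF D d] .
  ultimately have "n \<le> himp (himp x d) d" unfolding n_def by (rule nuc_le[rotated])
  hence i1: "inf n (himp x d) \<le> d" by (simp add: himp_adj)
  have "inf (sup n d) (himp x d) = sup (inf n (himp x d)) (inf d (himp x d))"
    by (rule inf_sup_distrib2)
  also have "\<dots> \<le> d" using i1 by simp
  finally have "inf (sup n d) (himp x d) \<le> d" .
  moreover have "d \<le> inf (sup n d) (himp x d)" by (simp add: himp_ge)
  ultimately have eq: "d = inf (sup n d) (himp x d)" by (rule order.antisym[rotated])
  have "sup n d \<in> closed_sub n" by (simp add: closed_sub_def)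
  moreover have "himp x d \<in> opn x" by (simp add: opn_def himp_same)
  ultimately show "d \<in> TT D x" unfolding TT_def jn_def n_def[symmetric] using eq by blast
qed

lemma TT_self: assumes D: "is_sublocale D" and v: "v \<in> TT D v" shows "v \<in> D"
proof -
  from v obtain p q where pq: "p \<in> closed_sub (nuc D v)" "q \<in> opn v" "v = inf p q"
    unfolding TT_def jn_def by blast
  have "v \<le> q" using pq by simp
  hence "himp v q = top" by (rule himp_top)
  hence "q = top" using pq(2) by (simp add: opn_def)
  hence "v = p" using pq by simp
  hence "nuc D v \<le> v" using pq(1) by (simp add: closed_sub_def)
  hence "nuc D v = v" using nuc_ge[of v D] by simp
  thus ?thesis using nuc_in[OF D, of v] by simp
qed

lemma KK_TT: "KK D x \<inter> TT D x \<subseteq> {top}"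
proof
  fix u assume "u \<in> KK D x \<inter> TT D x"
  then have u1: "x \<le> u" and u2: "himp (nuc D x) u = u" and u3: "u \<in> TT D x"
    unfolding KK_def closed_sub_def opn_def by auto
  from u3 obtain p q where pq: "p \<in> closed_sub (nuc D x)" "q \<in> opn x" "u = inf p q"
    unfolding TT_def jn_def by blast
  have "x \<le> q" using u1 pq(3) by simp
  hence "himp x q = top" by (rule himp_top)
  hence "q = top" using pq(2) by (simp add: opn_def)
  hence "u = p" using pq by simp
  hence "nuc D x \<le> u" using pq(1) by (simp add: closed_sub_def)
  hence "himp (nuc D x) u = top" by (rule himp_top)
  thus "u \<in> {top}" using u2 by simp
qed

lemma Comp: "\<exists>a\<in>KK D x. \<exists>b\<in>TT D x. z = inf a b"
proof -
  define n where "n = nuc D x"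
  define a where "a = himp n (sup x z)"
  define b where "b = himp a z"
  have xa: "x \<le> a" unfolding a_def using himp_ge[of "sup x z" n] by simp
  have za: "z \<le> a" unfolding a_def using himp_ge[of "sup x z" n] by simp
  have aK: "a \<in> KK D x" unfolding KK_def closed_sub_def opn_def n_def[symmetric]
    using xa by (simp add: a_def himp_same)
  have na: "inf n a \<le> sup x z" unfolding a_def by (rule inf_himp)
  have ba: "inf b a \<le> z" unfolding b_def by (simp add: inf_commute inf_himp)
  have "inf (inf (sup n b) (himp x b)) a \<le> z"
  proof -
    have "inf (inf (sup n b) (himp x b)) a
        = sup (inf (inf n (himp x b)) a) (inf (inf b (himp x b)) a)"
      by (simp add: inf_sup_distrib2)
    moreover have "inf (inf b (himp x b)) a \<le> inf b a" by (rule inf_mono) simp_all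
    hence "inf (inf b (himp x b)) a \<le> z" using ba by (rule order.trans)
    moreover have "inf (inf n (himp x b)) a \<le> z"
    proof -
      have "inf (inf n (himp x b)) a \<le> inf n a" by (rule inf_mono) simp_all
      hence "inf (inf n (himp x b)) a \<le> sup x z" using na by (rule order.trans)
      hence "inf (inf n (himp x b)) a \<le> inf (inf (sup x z) (himp x b)) a"
        by (intro le_infI) (simp_all add: le_infI1 le_infI2)
      also have "inf (sup x z) (himp x b) = sup (inf x (himp x b)) (inf z (himp x b))"
        by (rule inf_sup_distrib2)
      also have "\<dots> \<le> sup b z" using inf_himp[of x b] by (simp add: le_supI1 le_supI2)
      finally have "inf (inf n (himp x b)) a \<le> inf (sup b z) a" by (simp add: le_infI1)
      also have "inf (sup b z) a = sup (inf b a) (inf z a)" by (rule inf_sup_distrib2)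
      also have "\<dots> \<le> z" using ba by simp
      finally show ?thesis .
    qed
    ultimately show ?thesis by simp
  qed
  hence "inf (sup n b) (himp x b) \<le> b" unfolding b_def by (simp add: himp_adj)
  moreover have "b \<le> inf (sup n b) (himp x b)" by (simp add: himp_ge)
  ultimately have eq: "b = inf (sup n b) (himp x b)" by (rule order.antisym[rotated])
  have "sup n b \<in> closed_sub n" by (simp add: closed_sub_def)
  moreover have "himp x b \<in> opn x" by (simp add: opn_def himp_same)
  ultimately have bT: "b \<in> TT D x" unfolding TT_def jn_def n_def[symmetric] using eq by blast
  have "z = inf a b" unfolding b_def using za by (simp add: inf_himp_eq)
  thus ?thesis using aK bT by blast
qed


section \<open>Elements of C(coS L)\<close>

lemma P_sl: "f \<in> extC_coS TYPE('a::frame) \<Longrightarrow> is_sublocale (f g)"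
  unfolding extC_coS_def by blast

lemma P_r1: "f \<in> extC_coS TYPE('a::frame) \<Longrightarrow> s \<le> r \<Longrightarrow> coS_meet (f (Up r)) (f (Down s)) = UNIV"
  unfolding extC_coS_def coS_bot_def by blast

lemma P_r2: "f \<in> extC_coS TYPE('a::frame) \<Longrightarrow> r < s \<Longrightarrow> f (Up r) \<inter> f (Down s) = {top}"
  unfolding extC_coS_def coS_top_def coS_join_def by blast

lemma P_r3: "f \<in> extC_coS TYPE('a::frame) \<Longrightarrow> f (Up r) = \<Inter>{f (Up s) | s. s > r}"
  unfolding extC_coS_def coS_Join_def by blast

lemma P_r4: "f \<in> extC_coS TYPE('a::frame) \<Longrightarrow> f (Down s) = \<Inter>{f (Down r) | r. r < s}"
  unfolding extC_coS_def coS_Join_def by blast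

lemma P_cover: assumes "f \<in> extC_coS TYPE('a::frame)" "s \<le> r"
  shows "\<exists>p\<in>f (Up r). \<exists>d\<in>f (Down s). z = inf p d"
  using P_r1[OF assms] coS_meet_UNIV[OF P_sl[OF assms(1)] P_sl[OF assms(1)]] by blast

lemma P_disj: assumes "f \<in> extC_coS TYPE('a::frame)" "r < s"
  shows "f (Up r) \<inter> f (Down s) \<subseteq> {top}"
  using P_r2[OF assms] by simp

lemma P_Up_mem: assumes "f \<in> extC_coS TYPE('a::frame)"
  shows "u \<in> f (Up r) \<longleftrightarrow> (\<forall>s>r. u \<in> f (Up s))"
  by (subst P_r3[OF assms]) blast

lemma P_Down_mem: assumes "f \<in> extC_coS TYPE('a::frame)"
  shows "u \<in> f (Down s) \<longleftrightarrow> (\<forall>r<s. u \<in> f (Down r))"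
  by (subst P_r4[OF assms]) blast

lemma P_mono: assumes "f \<in> extC_coS TYPE('a::frame)" "r \<le> r'"
  shows "f (Up r) \<subseteq> f (Up r')"
proof (cases "r = r'")
  case False
  hence "r < r'" using assms(2) by simp
  thus ?thesis using P_Up_mem[OF assms(1)] by blast
qed simp

lemma meet_main:
  assumes sf: "subfit TYPE('a::frame)" and fP: "f \<in> extC_coS TYPE('a)" and yP: "y \<in> extC_coS TYPE('a)"
    and H: "\<And>(a::'a) t. closed_sub a \<subseteq> f (Up t) \<Longrightarrow> closed_sub a \<subseteq> y (Up t)"
  shows "f (Up r) \<subseteq> y (Up r)"
proof -
  have key: "f (Up r) \<subseteq> y (Up s)" if rs: "r < s" for s
  proof -
    define F where "F = f (Up s)"
    define D where "D = f (Down s)"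
    define Y where "Y = y (Up s)"
    have slF: "is_sublocale F" unfolding F_def by (rule P_sl[OF fP])
    have slD: "is_sublocale D" unfolding D_def by (rule P_sl[OF fP])
    have slY: "is_sublocale Y" unfolding Y_def by (rule P_sl[OF yP])
    have cov: "\<exists>p\<in>F. \<exists>d\<in>D. z = inf p d" for z
      unfolding F_def D_def by (rule P_cover[OF fP order.refl])
    have KF: "KK D x \<subseteq> F" for x
    proof
      fix u assume u: "u \<in> KK D x"
      obtain p d where pd: "p \<in> F" "d \<in> D" "u = inf p d" using cov by blast
      have "d \<in> TT D x" using D_sub_TT[OF slD] pd(2) by blast
      have "u = p" by (rule L1[OF KK_sl TT_sl KK_TT u \<open>d \<in> TT D x\<close> pd(3)])
      thus "u \<in> F" using pd(1) by simp
    qed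
    have KY: "KK D x \<subseteq> Y" for x
    proof
      fix u assume u: "u \<in> KK D x"
      define n where "n = nuc D x"
      have u1: "x \<le> u" and u2: "himp n u = u"
        using u unfolding KK_def closed_sub_def opn_def n_def by auto
      have eq: "u = Inf {sup u e |e. sup e n = top}" by (rule subfit_open[OF sf u2])
      have "sup u e \<in> Y" if e: "sup e n = top" for e
      proof -
        have "closed_sub (sup u e) \<subseteq> KK D x"
        proof
          fix h assume "h \<in> closed_sub (sup u e)"
          hence h: "sup u e \<le> h" by (simp add: closed_sub_def)
          hence "x \<le> h" using u1 by (meson le_sup_iff order.trans)
          moreover have "himp n h = h" using himp_of_cover[OF e] h by simp
          ultimately show "h \<in> KK D x" unfolding KK_def closed_sub_def opn_def n_def by simp
        qed
        hence "closed_sub (sup u e) \<subseteq> F" using KF by blast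
        hence "closed_sub (sup u e) \<subseteq> Y" unfolding F_def Y_def by (rule H)
        thus ?thesis by (simp add: closed_sub_def subset_eq)
      qed
      hence "Inf {sup u e |e. sup e n = top} \<in> Y" by (intro sl_Inf[OF slY]) blast
      thus "u \<in> Y" using eq by simp
    qed
    have inT: "himp (nuc Y z) z \<in> TT D x" for z x
    proof -
      obtain a b where ab: "a \<in> KK D x" "b \<in> TT D x" "z = inf a b" using Comp by blast
      have "a \<in> Y" using KY ab(1) by blast
      show ?thesis by (rule P1[OF slY TT_sl \<open>a \<in> Y\<close> ab(2,3)])
    qed
    have inD: "himp (nuc Y z) z \<in> D" for z
      by (rule TT_self[OF slD inT])
    show ?thesis
    proof
      fix u assume u: "u \<in> f (Up r)"
      have eq: "u = inf (nuc Y u) (himp (nuc Y u) u)" using inf_himp_eq[OF nuc_ge, of Y u] by simp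
      have "u = nuc Y u"
        by (rule L1[OF P_sl[OF fP] slD _ u inD eq]) (unfold D_def, rule P_disj[OF fP rs])
      thus "u \<in> y (Up s)" using nuc_in[OF slY, of u] unfolding Y_def by simp
    qed
  qed
  show ?thesis using key P_Up_mem[OF yP] by blast
qed


section \<open>Step functions\<close>

definition stepL :: "'a::frame \<Rightarrow> rat \<Rightarrow> gen \<Rightarrow> 'a set" where
  "stepL a t g = (case g of Up r \<Rightarrow> (if r < t then {top} else closed_sub a)
                        | Down s \<Rightarrow> (if s \<le> t then UNIV else opn a))"

lemma Inter_mem: "u \<in> \<Inter>{F s |s. P s} \<longleftrightarrow> (\<forall>s. P s \<longrightarrow> u \<in> F s)"
  by blast

lemma P_I:
  assumes "\<And>g. is_sublocale (f g)"
    and "\<And>r s. s \<le> r \<Longrightarrow> coS_meet (f (Up r)) (f (Down s)) = UNIV"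
    and "\<And>r s. r < s \<Longrightarrow> f (Up r) \<inter> f (Down s) = {top}"
    and "\<And>r. f (Up r) = \<Inter>{f (Up s) | s. s > r}"
    and "\<And>s. f (Down s) = \<Inter>{f (Down r) | r. r < s}"
  shows "f \<in> extC_coS TYPE('a::frame)"
  unfolding extC_coS_def coS_bot_def coS_top_def coS_join_def coS_Join_def
  apply (intro CollectI conjI allI impI)
      apply (rule assms(1))
     apply (erule assms(2))
    apply (erule assms(3))
   apply (rule assms(4))
  apply (rule assms(5))
  done

lemma closed_opn_meet: "coS_meet (closed_sub a) (opn (a::'a::frame)) = UNIV"
proof (subst coS_meet_UNIV[OF sl_closed sl_opn], intro allI)
  fix z :: 'a
  have "inf (sup a z) (himp a z) = sup (inf a (himp a z)) (inf z (himp a z))"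
    by (rule inf_sup_distrib2)
  also have "\<dots> \<le> z" using inf_himp[of a z] by simp
  finally have "inf (sup a z) (himp a z) \<le> z" .
  moreover have "z \<le> inf (sup a z) (himp a z)" by (simp add: himp_ge)
  ultimately have "z = inf (sup a z) (himp a z)" by (rule order.antisym[rotated])
  moreover have "sup a z \<in> closed_sub a" by (simp add: closed_sub_def)
  moreover have "himp a z \<in> opn a" by (simp add: opn_def himp_same)
  ultimately show "\<exists>p\<in>closed_sub a. \<exists>q\<in>opn a. z = inf p q" by blast
qed

lemma closed_opn_int: "closed_sub a \<inter> opn (a::'a::frame) = {top}"
proof
  show "closed_sub a \<inter> opn a \<subseteq> {top}"
  proof
    fix u assume "u \<in> closed_sub a \<inter> opn a"
    hence "a \<le> u" "himp a u = u" by (auto simp: closed_sub_def opn_def)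
    thus "u \<in> {top}" using himp_top[of a u] by simp
  qed
  show "{top} \<subseteq> closed_sub a \<inter> opn a" using sl_top[OF sl_closed] sl_top[OF sl_opn] by blast
qed

lemma meet_UNIV_right: assumes A: "is_sublocale A" shows "coS_meet A (UNIV::'a::frame set) = UNIV"
proof (subst coS_meet_UNIV[OF A sl_UNIV], intro allI)
  fix z :: 'a
  have "z = inf top z" by simp
  thus "\<exists>a\<in>A. \<exists>b\<in>UNIV. z = inf a b" using sl_top[OF A] by blast
qed

lemma topset_int: "is_sublocale S \<Longrightarrow> {top} \<inter> S = {top}"
  using sl_top by blast

lemma stepL_P: "stepL (a::'a::frame) t \<in> extC_coS TYPE('a)"
proof (rule P_I)
  show "is_sublocale (stepL a t g)" for g
    by (cases g) (simp_all add: stepL_def sl_topset sl_closed sl_UNIV sl_opn)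
next
  fix r s :: rat assume sr: "s \<le> r"
  show "coS_meet (stepL a t (Up r)) (stepL a t (Down s)) = UNIV"
  proof (cases "s \<le> t")
    case True
    thus ?thesis by (simp add: stepL_def meet_UNIV_right sl_topset sl_closed)
  next
    case False
    hence "\<not> r < t" using sr by simp
    thus ?thesis using False by (simp add: stepL_def closed_opn_meet)
  qed
next
  fix r s :: rat assume rs: "r < s"
  show "stepL a t (Up r) \<inter> stepL a t (Down s) = {top}"
  proof (cases "r < t")
    case True
    thus ?thesis by (simp add: stepL_def topset_int sl_UNIV sl_opn)
  next
    case False
    hence "\<not> s \<le> t" using rs by simp
    thus ?thesis using False by (simp add: stepL_def closed_opn_int)
  qed
next
  fix r :: rat
  show "stepL a t (Up r) = \<Inter>{stepL a t (Up s) |s. s > r}"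
  proof (cases "r < t")
    case True
    then obtain q where q: "r < q" "q < t" using dense by blast
    show ?thesis
    proof (rule set_eqI)
      fix u
      have "u \<in> \<Inter>{stepL a t (Up s) |s. s > r} \<longleftrightarrow> (\<forall>s. s > r \<longrightarrow> u \<in> stepL a t (Up s))"
        by (rule Inter_mem)
      also have "\<dots> \<longleftrightarrow> u = top"
      proof
        assume "\<forall>s. s > r \<longrightarrow> u \<in> stepL a t (Up s)"
        hence "u \<in> stepL a t (Up q)" using q by blast
        thus "u = top" using q by (simp add: stepL_def)
      next
        assume "u = top"
        thus "\<forall>s. s > r \<longrightarrow> u \<in> stepL a t (Up s)"
          by (simp add: stepL_def closed_sub_def)
      qed
      finally show "u \<in> stepL a t (Up r) \<longleftrightarrow> u \<in> \<Inter>{stepL a t (Up s) |s. s > r}"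
        using True by (simp add: stepL_def)
    qed
  next
    case False
    show ?thesis
    proof (rule set_eqI)
      fix u
      have "u \<in> \<Inter>{stepL a t (Up s) |s. s > r} \<longleftrightarrow> (\<forall>s. s > r \<longrightarrow> u \<in> stepL a t (Up s))"
        by (rule Inter_mem)
      also have "\<dots> \<longleftrightarrow> u \<in> closed_sub a"
      proof
        assume "\<forall>s. s > r \<longrightarrow> u \<in> stepL a t (Up s)"
        hence "u \<in> stepL a t (Up (r+1))" by simp
        thus "u \<in> closed_sub a" using False by (simp add: stepL_def)
      next
        assume "u \<in> closed_sub a"
        thus "\<forall>s. s > r \<longrightarrow> u \<in> stepL a t (Up s)" using False
          by (simp add: stepL_def)
      qed
      finally show "u \<in> stepL a t (Up r) \<longleftrightarrow> u \<in> \<Inter>{stepL a t (Up s) |s. s > r}"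
        using False by (simp add: stepL_def)
    qed
  qed
next
  fix s :: rat
  show "stepL a t (Down s) = \<Inter>{stepL a t (Down r) |r. r < s}"
  proof (cases "s \<le> t")
    case True
    show ?thesis
    proof (rule set_eqI)
      fix u
      have "u \<in> \<Inter>{stepL a t (Down r) |r. r < s} \<longleftrightarrow> (\<forall>r. r < s \<longrightarrow> u \<in> stepL a t (Down r))"
        by (rule Inter_mem)
      also have "\<dots>" using True by (simp add: stepL_def)
      finally show "u \<in> stepL a t (Down s) \<longleftrightarrow> u \<in> \<Inter>{stepL a t (Down r) |r. r < s}"
        using True by (simp add: stepL_def)
    qed
  next
    case False
    then obtain q where q: "t < q" "q < s" using dense by (metis not_le)
    show ?thesis
    proof (rule set_eqI)
      fix u
      have "u \<in> \<Inter>{stepL a t (Down r) |r. r < s} \<longleftrightarrow> (\<forall>r. r < s \<longrightarrow> u \<in> stepL a t (Down r))"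
        by (rule Inter_mem)
      also have "\<dots> \<longleftrightarrow> u \<in> opn a"
      proof
        assume "\<forall>r. r < s \<longrightarrow> u \<in> stepL a t (Down r)"
        hence "u \<in> stepL a t (Down q)" using q by blast
        thus "u \<in> opn a" using q by (simp add: stepL_def)
      next
        assume "u \<in> opn a"
        thus "\<forall>r. r < s \<longrightarrow> u \<in> stepL a t (Down r)"
          by (simp add: stepL_def)
      qed
      finally show "u \<in> stepL a t (Down s) \<longleftrightarrow> u \<in> \<Inter>{stepL a t (Down r) |r. r < s}"
        using False by (simp add: stepL_def)
    qed
  qed
qed

lemma stepL_LSC: "stepL (a::'a::frame) t \<in> extLSC TYPE('a)"
  unfolding extLSC_def
proof (intro CollectI conjI allI stepL_P)
  fix r
  show "\<exists>b. stepL a t (Up r) = closed_sub b"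
  proof (cases "r < t")
    case True
    have "closed_sub (top::'a) = {top}" by (auto simp: closed_sub_def top_unique)
    thus ?thesis using True by (auto simp: stepL_def)
  qed (auto simp: stepL_def)
qed

lemma le_iff: "extC_le f g \<longleftrightarrow> (\<forall>r. g (Up r) \<subseteq> f (Up r))"
  by (simp add: extC_le_def coS_le_def)

lemma meet_witness:
  assumes sf: "subfit TYPE('a::frame)" and fP: "f \<in> extC_coS TYPE('a)"
  shows "is_meet_in (extC_coS TYPE('a)) extC_le {g \<in> extLSC TYPE('a). extC_le f g} f"
  unfolding is_meet_in_def
proof (intro conjI ballI impI)
  show "f \<in> extC_coS TYPE('a)" by (rule fP)
next
  fix b assume "b \<in> {g \<in> extLSC TYPE('a). extC_le f g}"
  thus "extC_le f b" by simp
next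
  fix y assume yP: "y \<in> extC_coS TYPE('a)"
    and yle: "\<forall>b\<in>{g \<in> extLSC TYPE('a). extC_le f g}. extC_le y b"
  have H: "closed_sub a \<subseteq> y (Up t)" if a: "closed_sub (a::'a) \<subseteq> f (Up t)" for a t
  proof -
    have "extC_le f (stepL a t)" unfolding le_iff
    proof
      fix r
      show "stepL a t (Up r) \<subseteq> f (Up r)"
      proof (cases "r < t")
        case True thus ?thesis using sl_top[OF P_sl[OF fP]] by (simp add: stepL_def)
      next
        case False
        hence "f (Up t) \<subseteq> f (Up r)" by (intro P_mono[OF fP]) simp
        thus ?thesis using False a by (simp add: stepL_def)
      qed
    qed
    hence "extC_le y (stepL a t)" using yle stepL_LSC by blast
    hence "stepL a t (Up t) \<subseteq> y (Up t)" by (simp add: le_iff)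
    thus ?thesis by (simp add: stepL_def)
  qed
  show "extC_le y f" unfolding le_iff
    using meet_main[OF sf fP yP H] by blast
qed

section \<open>Negation\<close>

definition negf :: "(gen \<Rightarrow> 'a set) \<Rightarrow> gen \<Rightarrow> 'a set" where
  "negf g x = (case x of Up r \<Rightarrow> g (Down (-r)) | Down s \<Rightarrow> g (Up (-s)))"

lemma negf_Up[simp]: "negf g (Up r) = g (Down (-r))" by (simp add: negf_def)
lemma negf_Down[simp]: "negf g (Down s) = g (Up (-s))" by (simp add: negf_def)

lemma negf_negf[simp]: "negf (negf g) = g"
proof
  fix x show "negf (negf g) x = g x" by (cases x) simp_all
qed

lemma coS_meet_comm: "coS_meet A B = coS_meet B A"
  by (simp add: coS_meet_def Un_commute)

lemma negf_P: assumes gP: "g \<in> extC_coS TYPE('a::frame)" shows "negf g \<in> extC_coS TYPE('a)"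
proof (rule P_I)
  show "is_sublocale (negf g x)" for x by (cases x) (simp_all add: P_sl[OF gP])
next
  fix r s :: rat assume "s \<le> r"
  hence "- r \<le> - s" by simp
  hence "coS_meet (g (Up (-s))) (g (Down (-r))) = UNIV" by (rule P_r1[OF gP])
  thus "coS_meet (negf g (Up r)) (negf g (Down s)) = UNIV"
    by (simp only: negf_Up negf_Down coS_meet_comm)
next
  fix r s :: rat assume "r < s"
  hence "- s < - r" by simp
  hence "g (Up (-s)) \<inter> g (Down (-r)) = {top}" by (rule P_r2[OF gP])
  thus "negf g (Up r) \<inter> negf g (Down s) = {top}"
    by (simp only: negf_Up negf_Down Int_commute)
next
  fix r :: rat
  show "negf g (Up r) = \<Inter>{negf g (Up s) |s. s > r}"
  proof (rule set_eqI)
    fix u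
    have "u \<in> negf g (Up r) \<longleftrightarrow> (\<forall>q < - r. u \<in> g (Down q))"
      unfolding negf_Up by (rule P_Down_mem[OF gP])
    also have "\<dots> \<longleftrightarrow> (\<forall>s>r. u \<in> g (Down (-s)))"
    proof
      assume H: "\<forall>q < - r. u \<in> g (Down q)"
      show "\<forall>s>r. u \<in> g (Down (-s))"
      proof (intro allI impI)
        fix s :: rat assume "s > r" hence "-s < -r" by simp
        thus "u \<in> g (Down (-s))" using H by blast
      qed
    next
      assume H: "\<forall>s>r. u \<in> g (Down (-s))"
      show "\<forall>q < - r. u \<in> g (Down q)"
      proof (intro allI impI)
        fix q :: rat assume "q < -r" hence "-q > r" by simp
        thus "u \<in> g (Down q)" using H by force
      qed
    qed
    also have "\<dots> \<longleftrightarrow> u \<in> \<Inter>{negf g (Up s) |s. s > r}" by (subst Inter_mem) simp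
    finally show "u \<in> negf g (Up r) \<longleftrightarrow> u \<in> \<Inter>{negf g (Up s) |s. s > r}" .
  qed
next
  fix s :: rat
  show "negf g (Down s) = \<Inter>{negf g (Down r) |r. r < s}"
  proof (rule set_eqI)
    fix u
    have "u \<in> negf g (Down s) \<longleftrightarrow> (\<forall>q > - s. u \<in> g (Up q))"
      unfolding negf_Down by (rule P_Up_mem[OF gP])
    also have "\<dots> \<longleftrightarrow> (\<forall>r<s. u \<in> g (Up (-r)))"
    proof
      assume H: "\<forall>q > - s. u \<in> g (Up q)"
      show "\<forall>r<s. u \<in> g (Up (-r))"
      proof (intro allI impI)
        fix r :: rat assume "r < s" hence "-r > -s" by simp
        thus "u \<in> g (Up (-r))" using H by blast
      qed
    next
      assume H: "\<forall>r<s. u \<in> g (Up (-r))"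
      show "\<forall>q > - s. u \<in> g (Up q)"
      proof (intro allI impI)
        fix q :: rat assume "q > -s" hence "-q < s" by simp
        thus "u \<in> g (Up q)" using H by force
      qed
    qed
    also have "\<dots> \<longleftrightarrow> u \<in> \<Inter>{negf g (Down r) |r. r < s}" by (subst Inter_mem) simp
    finally show "u \<in> negf g (Down s) \<longleftrightarrow> u \<in> \<Inter>{negf g (Down r) |r. r < s}" .
  qed
qed

lemma le_Down_iff:
  assumes fP: "f \<in> extC_coS TYPE('a::frame)" and gP: "g \<in> extC_coS TYPE('a)"
  shows "extC_le f g \<longleftrightarrow> (\<forall>s. f (Down s) \<subseteq> g (Down s))"
proof
  assume le: "extC_le f g"
  show "\<forall>s. f (Down s) \<subseteq> g (Down s)"
  proof (intro allI subsetI)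
    fix s u assume u: "u \<in> f (Down s)"
    have "u \<in> g (Down r)" if rs: "r < s" for r
    proof -
      obtain p d where pd: "p \<in> g (Up r)" "d \<in> g (Down r)" "u = inf p d"
        using P_cover[OF gP order.refl] by blast
      have p: "p \<in> f (Up r)" using le pd(1) by (auto simp: le_iff)
      have disj: "f (Down s) \<inter> f (Up r) \<subseteq> {top}" using P_disj[OF fP rs] by blast
      have "u = inf d p" using pd(3) by (simp add: inf_commute)
      hence "u = d" by (rule L1[OF P_sl[OF fP] P_sl[OF fP] disj u p])
      thus ?thesis using pd(2) by simp
    qed
    thus "u \<in> g (Down s)" using P_Down_mem[OF gP] by blast
  qed
next
  assume le: "\<forall>s. f (Down s) \<subseteq> g (Down s)"
  show "extC_le f g" unfolding le_iff
  proof (intro allI subsetI)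
    fix r u assume u: "u \<in> g (Up r)"
    have "u \<in> f (Up s)" if rs: "r < s" for s
    proof -
      obtain p d where pd: "p \<in> f (Up s)" "d \<in> f (Down s)" "u = inf p d"
        using P_cover[OF fP order.refl] by blast
      have d: "d \<in> g (Down s)" using le pd(2) by blast
      have "u = p" by (rule L1[OF P_sl[OF gP] P_sl[OF gP] P_disj[OF gP rs] u d pd(3)])
      thus ?thesis using pd(1) by simp
    qed
    thus "u \<in> f (Up r)" using P_Up_mem[OF fP] by blast
  qed
qed

lemma neg_le:
  assumes fP: "f \<in> extC_coS TYPE('a::frame)" and gP: "g \<in> extC_coS TYPE('a)"
  shows "extC_le (negf g) (negf f) \<longleftrightarrow> extC_le f g"
proof -
  have "extC_le (negf g) (negf f) \<longleftrightarrow> (\<forall>r. f (Down (-r)) \<subseteq> g (Down (-r)))"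
    by (simp add: le_iff)
  also have "\<dots> \<longleftrightarrow> (\<forall>s. f (Down s) \<subseteq> g (Down s))"
  proof
    assume H: "\<forall>r. f (Down (-r)) \<subseteq> g (Down (-r))"
    show "\<forall>s. f (Down s) \<subseteq> g (Down s)"
    proof
      fix s :: rat show "f (Down s) \<subseteq> g (Down s)" using H[rule_format, of "-s"] by simp
    qed
  qed simp
  also have "\<dots> \<longleftrightarrow> extC_le f g" using le_Down_iff[OF fP gP] by simp
  finally show ?thesis .
qed

lemma negf_LSC: assumes "g \<in> extLSC TYPE('a::frame)" shows "negf g \<in> extUSC TYPE('a)"
proof -
  have gP: "g \<in> extC_coS TYPE('a)" and c: "\<forall>r. \<exists>a. g (Up r) = closed_sub a"
    using assms unfolding extLSC_def by auto
  have "\<forall>s. \<exists>a. negf g (Down s) = closed_sub a" using c by simp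
  thus ?thesis unfolding extUSC_def using negf_P[OF gP] by blast
qed

lemma join_witness:
  assumes sf: "subfit TYPE('a::frame)" and fP: "f \<in> extC_coS TYPE('a)"
  shows "\<exists>B\<subseteq>extUSC TYPE('a). is_join_in (extC_coS TYPE('a)) extC_le B f"
proof -
  define B' where "B' = {g \<in> extLSC TYPE('a). extC_le (negf f) g}"
  have nfP: "negf f \<in> extC_coS TYPE('a)" by (rule negf_P[OF fP])
  have M: "is_meet_in (extC_coS TYPE('a)) extC_le B' (negf f)"
    unfolding B'_def by (rule meet_witness[OF sf nfP])
  have B'P: "B' \<subseteq> extC_coS TYPE('a)" unfolding B'_def extLSC_def by auto
  have "negf ` B' \<subseteq> extUSC TYPE('a)" unfolding B'_def using negf_LSC by auto
  moreover have "is_join_in (extC_coS TYPE('a)) extC_le (negf ` B') f"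
    unfolding is_join_in_def
  proof (intro conjI ballI impI)
    show "f \<in> extC_coS TYPE('a)" by (rule fP)
  next
    fix b assume "b \<in> negf ` B'"
    then obtain g where g: "g \<in> B'" "b = negf g" by blast
    have gP: "g \<in> extC_coS TYPE('a)" using g(1) B'P by blast
    have "extC_le (negf f) g" using g(1) unfolding B'_def by simp
    hence "extC_le (negf g) (negf (negf f))" using neg_le[OF nfP gP] by simp
    thus "extC_le b f" using g(2) by simp
  next
    fix y assume yP: "y \<in> extC_coS TYPE('a)" and H: "\<forall>b\<in>negf ` B'. extC_le b y"
    have "extC_le (negf y) g" if g: "g \<in> B'" for g
    proof -
      have gP: "g \<in> extC_coS TYPE('a)" using g B'P by blast
      have "extC_le (negf g) y" using H g by blast
      thus ?thesis using neg_le[OF negf_P[OF gP] yP] by simp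
    qed
    hence "extC_le (negf y) (negf f)" using M negf_P[OF yP] unfolding is_meet_in_def by blast
    thus "extC_le f y" using neg_le[OF fP yP] by simp
  qed
  ultimately show ?thesis by blast
qed

theorem proposition4p4:
  assumes "subfit TYPE('a::frame)"
  shows "meet_dense (extC_coS TYPE('a)) extC_le (extLSC TYPE('a))
       \<and> join_dense (extC_coS TYPE('a)) extC_le (extUSC TYPE('a))"
proof
  show "meet_dense (extC_coS TYPE('a)) extC_le (extLSC TYPE('a))"
    unfolding meet_dense_def
  proof
    fix f assume fP: "f \<in> extC_coS TYPE('a)"
    show "\<exists>B\<subseteq>extLSC TYPE('a). is_meet_in (extC_coS TYPE('a)) extC_le B f"
      by (rule exI[of _ "{g \<in> extLSC TYPE('a). extC_le f g}"]) (auto intro: meet_witness[OF assms fP])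
  qed
  show "join_dense (extC_coS TYPE('a)) extC_le (extUSC TYPE('a))"
    unfolding join_dense_def using join_witness[OF assms] by blast
qed

end
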